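(* Let $\lambda\in\{1,2\}$ and let $u,t,v,w$ be integers such that: $(uw,t)$ satisfies $S_{\lambda,1}$ and $(uw)\cdot v=t^3+t^{\lambda}+1$ (so $uw,t,v$ are consecutive terms of $\langle uw,t\rangle_{S_{\lambda,1}}=\langle t,v\rangle_{S_{2,\lambda}}$); $(vw,t)$ satisfies $S_{\lambda,1}$ (so $vw,t,u$ are consecutive terms of $\langle vw,t\rangle_{S_{\lambda,1}}=\langle t,u\rangle_{S_{2,\lambda}}$); $|t|$ is a prime; and $t\nmid (u-v)$. Then $(-uv,t)$ satisfies $S_{\lambda,1}$, so $-uv,t,-w$ are, in that order, three consecutive terms of a third 4-chain $\langle -uv,t\rangle_{S_{\lambda,1}}=\langle t,-w\rangle_{S_{2,\lambda}}$.
   Context: For $\lambda_a,\lambda_b\in\{1,2\}$, a pair of integers $(x,y)$ satisfies the system $S_{\lambda_a,\lambda_b}$ if $x\mid y^3+y^{\lambda_a}+1$ and $y\mid x^3+x^{\lambda_b}+1$. For such a pair, $\langle x,y\rangle_{S_{\lambda_a,\lambda_b}}$ denotes the bi-infinite integer sequence $(u_n)$ with $u_0=x$, $u_1=y$ and $u_{n-1}u_{n+1}=u_n^3+u_n^{e_n}+1$ for all $n$, where $e_n$ has period 4 with $(e_0,e_1,e_2,e_3)=(\lambda_b,\lambda_a,3-\lambda_b,3-\lambda_a)$; sequences are identified up to shift and reversal of indices. "$u,t,s$, in that order, are three consecutive terms of $\langle u,t\rangle_{S_{\lambda_a,\lambda_b}}$" means $(u,t)$ satisfies $S_{\lambda_a,\lambda_b}$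 and $us=t^3+t^{\lambda_a}+1$. *)

theory Defs
  imports "HOL-Computational_Algebra.Primes"
begin

definition satisfies_S :: "nat \<Rightarrow> nat \<Rightarrow> int \<Rightarrow> int \<Rightarrow> bool" where
  "satisfies_S la lb x y \<longleftrightarrow> x dvd y ^ 3 + y ^ la + 1 \<and> y dvd x ^ 3 + x ^ lb + 1"

text \<open>u, t, s are, in that order, three consecutive terms of the sequence generated by (u,t)
  for S_{la,lb}: (u,t) satisfies S_{la,lb} and u*s = t^3 + t^la + 1.\<close>
definition consec3 :: "nat \<Rightarrow> nat \<Rightarrow> int \<Rightarrow> int \<Rightarrow> int \<Rightarrow> bool" where
  "consec3 la lb u t s \<longleftrightarrow> satisfies_S la lb u t \<and> u * s = t ^ 3 + t ^ la + 1"

end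

theory Submission
  imports Defs
begin

theorem theorem13:
  fixes lam :: nat and u t v w :: int
  assumes "lam \<in> {1, 2}"
    and "consec3 lam 1 (u * w) t v"
    and "satisfies_S lam 1 (v * w) t"
    and "prime \<bar>t\<bar>"
    and "\<not> t dvd (u - v)"
  shows "satisfies_S lam 1 (- (u * v)) t \<and> consec3 lam 1 (- (u * v)) t (- w)"
proof -
  define a where "a = u * w"
  define b where "b = v * w"
  define x where "x = u * v"
  have N: "u * w * v = t ^ 3 + t ^ lam + 1" using assms(2) unfolding consec3_def by simp
  have H1: "t dvd a^3 + a + 1" using assms(2) unfolding consec3_def satisfies_S_def a_def by simp
  have H2: "t dvd b^3 + b + 1" using assms(3) unfolding satisfies_S_def b_def by simp
  have "t dvd t^3 + t^lam" using assms(1) by auto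
  moreover have "x * w - 1 = t^3 + t^lam" using N unfolding x_def by (simp add: algebra_simps)
  ultimately have E1: "t dvd x * w - 1" by simp
  have pr: "prime \<bar>t\<bar>" by fact
  have nw: "\<not> t dvd w"
  proof
    assume "t dvd w"
    then have "t dvd x * w" by simp
    then have "t dvd x * w - (x * w - 1)" using dvd_diff E1 by blast
    then have "t dvd 1" by simp
    then have "\<bar>t\<bar> = 1" by simp
    with pr show False by simp
  qed
  have eq1: "(a - b) * (a^2 + a*b + b^2 + 1) = (a^3 + a + 1) - (b^3 + b + 1)" by algebra
  have "t dvd (a - b) * (a^2 + a*b + b^2 + 1)" unfolding eq1 by (rule dvd_diff[OF H1 H2])
  then have "\<bar>t\<bar> dvd (a - b) * (a^2 + a*b + b^2 + 1)" by simp
  then have "\<bar>t\<bar> dvd (a - b) \<or> \<bar>t\<bar> dvd (a^2 + a*b + b^2 + 1)"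
    using pr prime_dvd_mult_iff by blast
  moreover have "\<not> \<bar>t\<bar> dvd (a - b)"
  proof
    assume "\<bar>t\<bar> dvd (a - b)"
    then have "\<bar>t\<bar> dvd (u - v) * w" unfolding a_def b_def by (simp add: algebra_simps)
    then have "\<bar>t\<bar> dvd (u - v) \<or> \<bar>t\<bar> dvd w" using pr prime_dvd_mult_iff by blast
    with nw assms(5) show False by simp
  qed
  ultimately have Q: "t dvd a^2 + a*b + b^2 + 1" by simp
  have eq2: "a*b*(a+b) - 1 = a * (a^2 + a*b + b^2 + 1) - (a^3 + a + 1)" by algebra
  have E2: "t dvd a*b*(a+b) - 1" unfolding eq2 by (rule dvd_diff[OF dvd_mult[OF Q] H1])
  have eqD1: "w^2*(u+v) - 1 = (a*b*(a+b) - 1) - (x*w - 1) * (w^2*(u+v))"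
    unfolding a_def b_def x_def by algebra
  have D1: "t dvd w^2*(u+v) - 1" unfolding eqD1 by (rule dvd_diff[OF E2 dvd_mult2[OF E1]])
  have eqD2: "w*(u+v) - x = x * (w^2*(u+v) - 1) - (x*w - 1) * (w*(u+v))"
    unfolding x_def by algebra
  have "t dvd w*(u+v) - x" unfolding eqD2 by (rule dvd_diff[OF dvd_mult[OF D1] dvd_mult2[OF E1]])
  moreover have "w*(u+v) = a + b" unfolding a_def b_def by algebra
  ultimately have D2: "t dvd (a+b) - x" by simp
  have eq3: "1 - (a+b) - (a+b)^3 = (- 3) * (a*b*(a+b) - 1) - (a^3 + a + 1) - (b^3 + b + 1)" by algebra
  have G1: "t dvd 1 - (a+b) - (a+b)^3" unfolding eq3 by (rule dvd_diff[OF dvd_diff[OF dvd_mult[OF E2] H1] H2])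
  have eq4: "1 - x - x^3 = ((a+b) - x) * (1 + (a+b)^2 + (a+b)*x + x^2) + (1 - (a+b) - (a+b)^3)" by algebra
  have G: "t dvd 1 - x - x^3" unfolding eq4 by (rule dvd_add[OF dvd_mult2[OF D2] G1])
  have S: "satisfies_S lam 1 (- (u * v)) t"
    unfolding satisfies_S_def
  proof
    have eqN: "t ^ 3 + t ^ lam + 1 = - (u * v) * - w" using N by (simp add: algebra_simps)
    show "- (u * v) dvd t ^ 3 + t ^ lam + 1" by (rule dvdI[OF eqN])
    have eqG: "(- (u * v)) ^ 3 + (- (u * v)) ^ 1 + 1 = 1 - x - x^3" unfolding x_def by algebra
    show "t dvd (- (u * v)) ^ 3 + (- (u * v)) ^ 1 + 1" unfolding eqG by (rule G)
  qed
  moreover have "- (u * v) * - w = t ^ 3 + t ^ lam + 1" using N by (simp add: algebra_simps)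
  ultimately show ?thesis unfolding consec3_def by simp
qed

end
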